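(* Let $C$ be a convex subset of the Euclidean plane $\mathbb{R}^2$ (not necessarily closed or bounded). Then for every finite point set $P \subset \mathbb{R}^2$, the straight-line drawing of $G_{st}(P,C)$ is a plane graph.
   Context: For a finite set $P \subset \mathbb{R}^2$ and a set $C \subseteq \mathbb{R}^2$, $G_{st}(P,C)$ is the graph with vertex set $P$ in which two distinct points $u,v \in P$ are adjacent if and only if there is a positively scaled translate (homothet) $\lambda C + \mathbf{v} = \{\lambda x + \mathbf{v} : x \in C\}$, with $\lambda > 0$ and $\mathbf{v} \in \mathbb{R}^2$, such that $P \cap (\lambda C + \mathbf{v}) = \{u,v\}$. The graph is drawn with each vertex at its point and each edge as the closed straight-line segment between its endpoints. A drawing is a plane graph if (1) no vertex lies on an edge of which it is not an endpoint, and (2) no two edges cross, i.e., two edges may intersect only at a common endpoint. *)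

theory Defs
  imports "HOL-Analysis.Analysis"
begin

definition homothet :: "real \<Rightarrow> real^2 \<Rightarrow> (real^2) set \<Rightarrow> (real^2) set" where
  "homothet lam v C = (\<lambda>x. lam *\<^sub>R x + v) ` C"

definition st_adj :: "(real^2) set \<Rightarrow> (real^2) set \<Rightarrow> real^2 \<Rightarrow> real^2 \<Rightarrow> bool" where
  "st_adj P C u v \<longleftrightarrow> u \<in> P \<and> v \<in> P \<and> u \<noteq> v \<and>
     (\<exists>lam v0. lam > 0 \<and> P \<inter> homothet lam v0 C = {u, v})"

definition plane_drawing :: "(real^2) set \<Rightarrow> (real^2 \<Rightarrow> real^2 \<Rightarrow> bool) \<Rightarrow> bool" where
  "plane_drawing P E \<longleftrightarrow>
     (\<forall>u v w. E u v \<and> w \<in> P \<and> w \<noteq> u \<and> w \<noteq> v \<longrightarrow> w \<notin> closed_segment u v) \<and>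
     (\<forall>u v x y. E u v \<and> E x y \<and> {u, v} \<noteq> {x, y} \<longrightarrow>
        closed_segment u v \<inter> closed_segment x y \<subseteq> {u, v} \<inter> {x, y})"

end

theory Submission
  imports Defs
begin

lemma conv3:
  fixes a b c :: "'a::real_vector"
  assumes "convex S" "a \<in> S" "b \<in> S" "c \<in> S" "P \<ge> 0" "Q \<ge> 0" "R \<ge> 0" "P + Q + R = 1"
  shows "P *\<^sub>R a + Q *\<^sub>R b + R *\<^sub>R c \<in> S"
proof -
  have "convex hull {a,b,c} \<subseteq> S" using assms by (intro hull_minimal) auto
  moreover have "P *\<^sub>R a + Q *\<^sub>R b + R *\<^sub>R c \<in> convex hull {a,b,c}"
    unfolding convex_hull_3 using assms by blast
  ultimately show ?thesis by blast
qed

lemma core: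
  fixes p q e f :: "'a::real_vector"
  assumes cv: "convex S" and pS: "p \<in> S" and BS: "p - b *\<^sub>R e \<in> S" and qS: "q \<in> S"
    and DS: "q + g *\<^sub>R f \<in> S" and c: "q - p = \<xi> *\<^sub>R e + \<eta> *\<^sub>R f"
    and xi: "\<xi> \<ge> 0" and eta: "\<eta> \<ge> 0" and b: "b > 0" and g: "g > 0" and r: "\<rho> > 0"
  shows "q - (\<rho>*b) *\<^sub>R e \<in> S \<or> p + (g/\<rho>) *\<^sub>R f \<in> S"
proof (cases "\<rho> * b * (g + \<eta>) \<le> g * (b + \<xi>)")
  case True
  define P where "P = \<rho>*b/(b+\<xi>)"
  define Q where "Q = P*\<eta>/g"
  define R where "R = 1 - P - Q"
  have P0: "P \<ge> 0" using b xi r by (simp add: P_def)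
  have Q0: "Q \<ge> 0" using P0 eta g by (simp add: Q_def)
  have "P * (g + \<eta>) \<le> g" using True b xi by (simp add: P_def field_simps)
  hence "P + Q \<le> 1" using g by (simp add: Q_def field_simps)
  hence R0: "R \<ge> 0" by (simp add: R_def)
  have qq: "q = p + \<xi> *\<^sub>R e + \<eta> *\<^sub>R f" using c by (simp add: algebra_simps)
  have "P *\<^sub>R (p - b *\<^sub>R e) + Q *\<^sub>R (q + g *\<^sub>R f) + R *\<^sub>R q
      = (P+Q+R) *\<^sub>R p + ((Q+R)*\<xi> - P*b) *\<^sub>R e + ((Q+R)*\<eta> + Q*g) *\<^sub>R f"
    unfolding qq by (simp add: algebra_simps)
  also have "(Q+R)*\<xi> - P*b = \<xi> - \<rho>*b"
  proof -
    have bx: "b + \<xi> > 0" using b xi by simp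
    have "(Q+R)*\<xi> - P*b = \<xi> - P*(b+\<xi>)" by (simp add: R_def algebra_simps)
    also have "P*(b+\<xi>) = \<rho>*b" using bx by (simp add: P_def)
    finally show ?thesis .
  qed
  also have "(Q+R)*\<eta> + Q*g = \<eta>" using g by (simp add: R_def Q_def field_simps)
  also have "P+Q+R = 1" by (simp add: R_def)
  finally have "P *\<^sub>R (p - b *\<^sub>R e) + Q *\<^sub>R (q + g *\<^sub>R f) + R *\<^sub>R q = q - (\<rho>*b) *\<^sub>R e"
    unfolding qq by (simp add: algebra_simps)
  moreover have "P *\<^sub>R (p - b *\<^sub>R e) + Q *\<^sub>R (q + g *\<^sub>R f) + R *\<^sub>R q \<in> S"
    using conv3[OF cv BS DS qS P0 Q0 R0] by (simp add: R_def)
  ultimately show ?thesis by simp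
next
  case False
  define R where "R = g/(\<rho>*(\<eta>+g))"
  define Q where "Q = R*\<xi>/b"
  define P where "P = 1 - Q - R"
  have R0: "R \<ge> 0" using g eta r by (simp add: R_def)
  have Q0: "Q \<ge> 0" using R0 xi b by (simp add: Q_def)
  have "R * (b + \<xi>) \<le> b"
  proof -
    have d: "\<rho>*(\<eta>+g) > 0" using r g eta by simp
    have "g * (b + \<xi>) \<le> b * (\<rho>*(\<eta>+g))" using False by (simp add: algebra_simps)
    hence "g * (b + \<xi>) / (\<rho>*(\<eta>+g)) \<le> b" using d by (simp add: divide_le_eq)
    thus ?thesis by (simp add: R_def)
  qed
  hence "Q + R \<le> 1" using b by (simp add: Q_def field_simps)
  hence P0: "P \<ge> 0" by (simp add: P_def)
  have qq: "q = p + \<xi> *\<^sub>R e + \<eta> *\<^sub>R f" using c by (simp add: algebra_simps)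
  have "P *\<^sub>R p + Q *\<^sub>R (p - b *\<^sub>R e) + R *\<^sub>R (q + g *\<^sub>R f)
      = (P+Q+R) *\<^sub>R p + (R*\<xi> - Q*b) *\<^sub>R e + (R*\<eta> + R*g) *\<^sub>R f"
    unfolding qq by (simp add: algebra_simps)
  also have "R*\<xi> - Q*b = 0" using b by (simp add: Q_def)
  also have "R*\<eta> + R*g = g/\<rho>"
  proof -
    have "\<eta>+g \<noteq> 0" using g eta by simp
    hence "R*(\<eta>+g) = g/\<rho>" using r by (simp add: R_def)
    thus ?thesis by (simp add: algebra_simps)
  qed
  also have "P+Q+R = 1" by (simp add: P_def)
  finally have "P *\<^sub>R p + Q *\<^sub>R (p - b *\<^sub>R e) + R *\<^sub>R (q + g *\<^sub>R f) = p + (g/\<rho>) *\<^sub>R f"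
    by simp
  moreover have "P *\<^sub>R p + Q *\<^sub>R (p - b *\<^sub>R e) + R *\<^sub>R (q + g *\<^sub>R f) \<in> S"
    using conv3[OF cv pS BS DS P0 Q0 R0] by (simp add: P_def)
  ultimately show ?thesis by simp
qed

lemma cross_core:
  fixes p q e f :: "'a::real_vector"
  assumes cv: "convex S" and pS: "p \<in> S" and qS: "q \<in> S" and l1: "l1 > 0" and l2: "l2 > 0"
    and s: "0 < s" "s < 1" and t: "0 < t" "t < 1"
    and hu: "p + (s/l1) *\<^sub>R e \<in> S" and hv: "p - ((1-s)/l1) *\<^sub>R e \<in> S"
    and hx: "q + (t/l2) *\<^sub>R f \<in> S" and hy: "q - ((1-t)/l2) *\<^sub>R f \<in> S"
    and c: "q - p = \<xi> *\<^sub>R e + \<eta> *\<^sub>R f"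
  shows "q + (s/l2) *\<^sub>R e \<in> S \<or> q - ((1-s)/l2) *\<^sub>R e \<in> S \<or>
         p + (t/l1) *\<^sub>R f \<in> S \<or> p - ((1-t)/l1) *\<^sub>R f \<in> S"
proof -
  define \<rho> where "\<rho> = l1/l2"
  have r: "\<rho> > 0" using l1 l2 by (simp add: \<rho>_def)
  have e1: "\<rho> * ((1-s)/l1) = (1-s)/l2" "\<rho> * (s/l1) = s/l2"
    using l1 l2 by (simp_all add: \<rho>_def)
  have e2: "(t/l2)/\<rho> = t/l1" "((1-t)/l2)/\<rho> = (1-t)/l1"
    using l1 l2 by (simp_all add: \<rho>_def)
  have b1: "(1-s)/l1 > 0" "s/l1 > 0" using s l1 by simp_all
  have g1: "t/l2 > 0" "(1-t)/l2 > 0" using t l2 by simp_all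
  have hu': "p - (s/l1) *\<^sub>R (-e) \<in> S" using hu by simp
  have hy': "q + ((1-t)/l2) *\<^sub>R (-f) \<in> S" using hy by simp
  consider "\<xi> \<ge> 0" "\<eta> \<ge> 0" | "\<xi> \<le> 0" "\<eta> \<ge> 0" | "\<xi> \<ge> 0" "\<eta> \<le> 0" | "\<xi> \<le> 0" "\<eta> \<le> 0"
    by linarith
  then show ?thesis
  proof cases
    case 1
    from core[OF cv pS hv qS hx c 1 b1(1) g1(1) r] show ?thesis
      unfolding e1 e2 by blast
  next
    case 2
    have c': "q - p = (-\<xi>) *\<^sub>R (-e) + \<eta> *\<^sub>R f" using c by simp
    from core[OF cv pS hu' qS hx c' _ 2(2) b1(2) g1(1) r] 2(1) show ?thesis
      unfolding e1 e2 by auto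
  next
    case 3
    have c': "q - p = \<xi> *\<^sub>R e + (-\<eta>) *\<^sub>R (-f)" using c by simp
    from core[OF cv pS hv qS hy' c' 3(1) _ b1(1) g1(2) r] 3(2) show ?thesis
      unfolding e1 e2 by auto
  next
    case 4
    have c': "q - p = (-\<xi>) *\<^sub>R (-e) + (-\<eta>) *\<^sub>R (-f)" using c by simp
    from core[OF cv pS hu' qS hy' c' _ _ b1(2) g1(2) r] 4 show ?thesis
      unfolding e1 e2 by auto
  qed
qed

definition det2 :: "real^2 \<Rightarrow> real^2 \<Rightarrow> real" where
  "det2 e f = e$1 * f$2 - e$2 * f$1"

lemma real_cramer:
  fixes ea eb fa fb wa wb :: real
  assumes d: "ea * fb - eb * fa \<noteq> 0"
  shows "wa = ((wa * fb - wb * fa) / (ea * fb - eb * fa)) * ea + ((ea * wb - eb * wa) / (ea * fb - eb * fa)) * fa"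
    and "wb = ((wa * fb - wb * fa) / (ea * fb - eb * fa)) * eb + ((ea * wb - eb * wa) / (ea * fb - eb * fa)) * fb"
proof -
  let ?d = "ea * fb - eb * fa"
  have "((wa * fb - wb * fa) / ?d) * ea + ((ea * wb - eb * wa) / ?d) * fa
       = ((wa * fb - wb * fa) * ea + (ea * wb - eb * wa) * fa) / ?d"
    by (simp add: add_divide_distrib)
  also have "(wa * fb - wb * fa) * ea + (ea * wb - eb * wa) * fa = wa * ?d" by (simp add: algebra_simps)
  finally show "wa = ((wa * fb - wb * fa) / ?d) * ea + ((ea * wb - eb * wa) / ?d) * fa" using d by simp
  have "((wa * fb - wb * fa) / ?d) * eb + ((ea * wb - eb * wa) / ?d) * fb
       = ((wa * fb - wb * fa) * eb + (ea * wb - eb * wa) * fb) / ?d"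
    by (simp add: add_divide_distrib)
  also have "(wa * fb - wb * fa) * eb + (ea * wb - eb * wa) * fb = wb * ?d" by (simp add: algebra_simps)
  finally show "wb = ((wa * fb - wb * fa) / ?d) * eb + ((ea * wb - eb * wa) / ?d) * fb" using d by simp
qed

lemma span2:
  assumes "det2 e f \<noteq> 0"
  shows "\<exists>\<xi> \<eta>. w = \<xi> *\<^sub>R e + \<eta> *\<^sub>R f"
proof -
  define d where "d = det2 e f"
  have d: "d \<noteq> 0" using assms by (simp add: d_def)
  define \<xi> where "\<xi> = (w$1 * f$2 - w$2 * f$1) / d"
  define \<eta> where "\<eta> = (e$1 * w$2 - e$2 * w$1) / d"
  have "w = \<xi> *\<^sub>R e + \<eta> *\<^sub>R f"
    unfolding vec_eq_iff forall_2 using d real_cramer[where ea="e$1" and eb="e$2" and fa="f$1" and fb="f$2" and wa="w$1" and wb="w$2"]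
    unfolding \<xi>_def \<eta>_def d_def det2_def by simp
  thus ?thesis by blast
qed

lemma par2:
  assumes "det2 e f = 0" "e \<noteq> 0"
  shows "\<exists>k. f = k *\<^sub>R e"
proof -
  have dd: "e$1 * f$2 = e$2 * f$1" using assms(1) by (simp add: det2_def)
  have "e$1 \<noteq> 0 \<or> e$2 \<noteq> 0" using assms(2) by (metis exhaust_2 vec_eq_iff zero_index)
  then show ?thesis
  proof
    assume h: "e$1 \<noteq> 0"
    have "f = (f$1/e$1) *\<^sub>R e"
      unfolding vec_eq_iff using h dd by (auto simp: forall_2 field_simps)
    thus ?thesis by blast
  next
    assume h: "e$2 \<noteq> 0"
    have "f = (f$2/e$2) *\<^sub>R e"
      unfolding vec_eq_iff using h dd by (auto simp: forall_2 field_simps)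
    thus ?thesis by blast
  qed
qed

lemma neq2:
  assumes "det2 e f \<noteq> 0" "a \<noteq> 0"
  shows "a *\<^sub>R e \<noteq> b *\<^sub>R f"
proof
  assume h: "a *\<^sub>R e = b *\<^sub>R f"
  have "det2 (a *\<^sub>R e) f = a * det2 e f" by (simp add: det2_def algebra_simps)
  moreover have "det2 (b *\<^sub>R f) f = 0" by (simp add: det2_def algebra_simps)
  ultimately show False using h assms by simp
qed

lemma hom_mem:
  assumes "lam > 0"
  shows "w \<in> homothet lam v0 C \<longleftrightarrow> (1/lam) *\<^sub>R (w - v0) \<in> C"
proof
  assume "w \<in> homothet lam v0 C"
  then obtain c where "c \<in> C" "w = lam *\<^sub>R c + v0" by (auto simp: homothet_def)
  thus "(1/lam) *\<^sub>R (w - v0) \<in> C" using assms by simp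
next
  assume h: "(1/lam) *\<^sub>R (w - v0) \<in> C"
  have "w = lam *\<^sub>R ((1/lam) *\<^sub>R (w - v0)) + v0" using assms by simp
  thus "w \<in> homothet lam v0 C" unfolding homothet_def using h by blast
qed

lemma hom_convex:
  assumes "convex C"
  shows "convex (homothet lam v0 C)"
proof -
  have "homothet lam v0 C = (\<lambda>x. v0 + lam *\<^sub>R x) ` C"
    unfolding homothet_def by (simp add: add.commute)
  thus ?thesis using convex_affinity[OF assms] by simp
qed

lemma seg_param:
  fixes z e :: "'a::real_vector"
  assumes "min a b \<le> r" "r \<le> max a b"
  shows "z + r *\<^sub>R e \<in> closed_segment (z + a *\<^sub>R e) (z + b *\<^sub>R e)"
proof (cases "a = b")
  case True
  then show ?thesis using assms by simp
next
  case False
  define m where "m = (r - a)/(b - a)"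
  have m: "0 \<le> m" "m \<le> 1" using assms False
    by (auto simp: m_def divide_simps min_def max_def split: if_splits)
  have "a + m * (b - a) = r" using False by (simp add: m_def)
  hence "(1 - m) *\<^sub>R (z + a *\<^sub>R e) + m *\<^sub>R (z + b *\<^sub>R e) = z + r *\<^sub>R e"
    by (simp add: algebra_simps flip: scaleR_add_left)
  thus ?thesis unfolding in_segment using m by metis
qed

lemma crossing:
  assumes cv: "convex C" and l1: "l1 > 0" and l2: "l2 > 0"
    and s: "0 < s" "s < 1" and t: "0 < t" "t < 1"
    and u: "u = z + s *\<^sub>R e" and v: "v = z + (s-1) *\<^sub>R e"
    and x: "x = z + t *\<^sub>R f" and y: "y = z + (t-1) *\<^sub>R f"
    and uH: "u \<in> homothet l1 a1 C" and vH: "v \<in> homothet l1 a1 C" and zH1: "z \<in> homothet l1 a1 C"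
    and xH: "x \<in> homothet l2 a2 C" and yH: "y \<in> homothet l2 a2 C" and zH2: "z \<in> homothet l2 a2 C"
    and det: "det2 e f \<noteq> 0"
  shows "u \<in> homothet l2 a2 C \<or> v \<in> homothet l2 a2 C \<or> x \<in> homothet l1 a1 C \<or> y \<in> homothet l1 a1 C"
proof -
  define p where "p = (1/l1) *\<^sub>R (z - a1)"
  define q where "q = (1/l2) *\<^sub>R (z - a2)"
  have pC: "p \<in> C" using zH1 l1 by (simp add: hom_mem p_def)
  have qC: "q \<in> C" using zH2 l2 by (simp add: hom_mem q_def)
  have U1: "(1/l1) *\<^sub>R (u - a1) = p + (s/l1) *\<^sub>R e" by (simp add: u p_def algebra_simps)
  have V1: "(1/l1) *\<^sub>R (v - a1) = p - ((1-s)/l1) *\<^sub>R e" by (simp add: v p_def algebra_simps diff_divide_distrib)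
  have X1: "(1/l1) *\<^sub>R (x - a1) = p + (t/l1) *\<^sub>R f" by (simp add: x p_def algebra_simps)
  have Y1: "(1/l1) *\<^sub>R (y - a1) = p - ((1-t)/l1) *\<^sub>R f" by (simp add: y p_def algebra_simps diff_divide_distrib)
  have U2: "(1/l2) *\<^sub>R (u - a2) = q + (s/l2) *\<^sub>R e" by (simp add: u q_def algebra_simps)
  have V2: "(1/l2) *\<^sub>R (v - a2) = q - ((1-s)/l2) *\<^sub>R e" by (simp add: v q_def algebra_simps diff_divide_distrib)
  have X2: "(1/l2) *\<^sub>R (x - a2) = q + (t/l2) *\<^sub>R f" by (simp add: x q_def algebra_simps)
  have Y2: "(1/l2) *\<^sub>R (y - a2) = q - ((1-t)/l2) *\<^sub>R f" by (simp add: y q_def algebra_simps diff_divide_distrib)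
  obtain \<xi> \<eta> where c: "q - p = \<xi> *\<^sub>R e + \<eta> *\<^sub>R f" using span2[OF det] by blast
  have hu: "p + (s/l1) *\<^sub>R e \<in> C" using uH l1 U1 by (simp add: hom_mem)
  have hv: "p - ((1-s)/l1) *\<^sub>R e \<in> C" using vH l1 V1 by (simp add: hom_mem)
  have hx: "q + (t/l2) *\<^sub>R f \<in> C" using xH l2 X2 by (simp add: hom_mem)
  have hy: "q - ((1-t)/l2) *\<^sub>R f \<in> C" using yH l2 Y2 by (simp add: hom_mem)
  from cross_core[OF cv pC qC l1 l2 s t hu hv hx hy c]
  show ?thesis
    using l1 l2 by (simp only: hom_mem U2 V2 X1 Y1) 
qed

lemma real1d:
  fixes a b s :: real
  assumes "0 < s" "s < 1" "(a < 0 \<and> 0 < b) \<or> (b < 0 \<and> 0 < a)"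
    and F1: "s-1 \<le> a \<Longrightarrow> a \<le> s \<Longrightarrow> a = s \<or> a = s-1"
    and F2: "s-1 \<le> b \<Longrightarrow> b \<le> s \<Longrightarrow> b = s \<or> b = s-1"
    and F3: "min a b \<le> s \<Longrightarrow> s \<le> max a b \<Longrightarrow> s = a \<or> s = b"
    and F4: "min a b \<le> s-1 \<Longrightarrow> s-1 \<le> max a b \<Longrightarrow> s-1 = a \<or> s-1 = b"
  shows "(a = s \<and> b = s-1) \<or> (a = s-1 \<and> b = s)"
  using assms(3)
proof
  assume h: "a < 0 \<and> 0 < b"
  have "b = s"
  proof (cases "b \<le> s")
    case True thus ?thesis using F2 h assms(1,2) by linarith
  next
    case False thus ?thesis using F3 h assms(1,2) by (auto simp: min_def max_def)
  qed
  moreover have "a = s - 1"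
  proof (cases "s - 1 \<le> a")
    case True thus ?thesis using F1 h assms(1,2) by linarith
  next
    case False thus ?thesis using F4 h assms(1,2) by (auto simp: min_def max_def)
  qed
  ultimately show ?thesis by simp
next
  assume h: "b < 0 \<and> 0 < a"
  have "a = s"
  proof (cases "a \<le> s")
    case True thus ?thesis using F1 h assms(1,2) by linarith
  next
    case False thus ?thesis using F3 h assms(1,2) by (auto simp: min_def max_def)
  qed
  moreover have "b = s - 1"
  proof (cases "s - 1 \<le> b")
    case True thus ?thesis using F2 h assms(1,2) by linarith
  next
    case False thus ?thesis using F4 h assms(1,2) by (auto simp: min_def max_def)
  qed
  ultimately show ?thesis by simp
qed

theorem mainTheorem2:
  fixes C P :: "(real^2) set"
  assumes "convex C" and "finite P"
  shows "plane_drawing P (st_adj P C)"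
proof -
  note cv = assms(1)
  have key: "\<exists>l a. l > 0 \<and> u \<in> homothet l a C \<and> v \<in> homothet l a C \<and>
      closed_segment u v \<subseteq> homothet l a C \<and> P \<inter> homothet l a C = {u,v}"
    if adj: "st_adj P C u v" for u v
  proof -
    obtain l a where la: "l > 0" "P \<inter> homothet l a C = {u,v}" using adj unfolding st_adj_def by blast
    hence "u \<in> homothet l a C" "v \<in> homothet l a C" by auto
    moreover have "closed_segment u v \<subseteq> homothet l a C"
      using calculation hom_convex[OF cv] by (simp add: closed_segment_subset)
    ultimately show ?thesis using la by blast
  qed
  have segP: "w = u \<or> w = v" if hh: "st_adj P C u v" "w \<in> P" "w \<in> closed_segment u v" for u v w
  proof -
    obtain l a where "closed_segment u v \<subseteq> homothet l a C" "P \<inter> homothet l a C = {u,v}"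
      using key[OF hh(1)] by blast
    thus ?thesis using hh by blast
  qed
  have part2: "closed_segment u v \<inter> closed_segment x y \<subseteq> {u, v} \<inter> {x, y}"
    if E1: "st_adj P C u v" and E2: "st_adj P C x y" and ne: "{u, v} \<noteq> {x, y}" for u v x y
  proof
    fix z assume zin: "z \<in> closed_segment u v \<inter> closed_segment x y"
    have uP: "u \<in> P" and vP: "v \<in> P" and uv: "u \<noteq> v" using E1 by (auto simp: st_adj_def)
    have xP: "x \<in> P" and yP: "y \<in> P" and xy: "x \<noteq> y" using E2 by (auto simp: st_adj_def)
    obtain l1 a1 where H1: "l1 > 0" "u \<in> homothet l1 a1 C" "v \<in> homothet l1 a1 C"
      "closed_segment u v \<subseteq> homothet l1 a1 C" "P \<inter> homothet l1 a1 C = {u,v}"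
      using key[OF E1] by blast
    obtain l2 a2 where H2: "l2 > 0" "x \<in> homothet l2 a2 C" "y \<in> homothet l2 a2 C"
      "closed_segment x y \<subseteq> homothet l2 a2 C" "P \<inter> homothet l2 a2 C = {x,y}"
      using key[OF E2] by blast
    show "z \<in> {u, v} \<inter> {x, y}"
    proof (cases "z \<in> {u,v,x,y}")
      case True
      then show ?thesis
      proof (elim insertE)
        assume "z = u" thus ?thesis using segP[OF E2 uP] zin by auto
      next
        assume "z = v" thus ?thesis using segP[OF E2 vP] zin by auto
      next
        assume "z = x" thus ?thesis using segP[OF E1 xP] zin by auto
      next
        assume "z = y" thus ?thesis using segP[OF E1 yP] zin by auto
      qed simp
    next
      case False
      hence "z \<in> open_segment u v" "z \<in> open_segment x y" using zin by (auto simp: open_segment_def)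
      then obtain s t where s: "0 < s" "s < 1" and zs: "z = (1 - s) *\<^sub>R u + s *\<^sub>R v"
        and t: "0 < t" "t < 1" and zt: "z = (1 - t) *\<^sub>R x + t *\<^sub>R y"
        unfolding in_segment by blast
      define e where "e = u - v"
      define f where "f = x - y"
      have ue: "u = z + s *\<^sub>R e" unfolding zs e_def by (simp add: algebra_simps)
      have ve: "v = z + (s-1) *\<^sub>R e" unfolding zs e_def by (simp add: algebra_simps)
      have xf: "x = z + t *\<^sub>R f" unfolding zt f_def by (simp add: algebra_simps)
      have yf: "y = z + (t-1) *\<^sub>R f" unfolding zt f_def by (simp add: algebra_simps)
      have e0: "e \<noteq> 0" using uv by (simp add: e_def)
      have zH1: "z \<in> homothet l1 a1 C" using zin H1(4) by blast
      have zH2: "z \<in> homothet l2 a2 C" using zin H2(4) by blast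
      show ?thesis
      proof (cases "det2 e f = 0")
        case False
        have s1: "s \<noteq> 0" "s - 1 \<noteq> 0" using s by auto
        have nu: "u \<noteq> x" "u \<noteq> y" "v \<noteq> x" "v \<noteq> y"
          unfolding ue ve xf yf
          using neq2[OF False s1(1), of t] neq2[OF False s1(1), of "t-1"]
            neq2[OF False s1(2), of t] neq2[OF False s1(2), of "t-1"] by simp_all
        from crossing[OF cv H1(1) H2(1) s t ue ve xf yf H1(2) H1(3) zH1 H2(2) H2(3) zH2 False]
        have "u \<in> homothet l2 a2 C \<or> v \<in> homothet l2 a2 C \<or> x \<in> homothet l1 a1 C \<or> y \<in> homothet l1 a1 C" .
        moreover have "u \<notin> homothet l2 a2 C"
        proof
          assume "u \<in> homothet l2 a2 C"
          hence "u \<in> P \<inter> homothet l2 a2 C" using uP by blast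
          hence "u \<in> {x,y}" using H2(5) by simp
          thus False using nu by simp
        qed
        moreover have "v \<notin> homothet l2 a2 C"
        proof
          assume "v \<in> homothet l2 a2 C"
          hence "v \<in> P \<inter> homothet l2 a2 C" using vP by blast
          hence "v \<in> {x,y}" using H2(5) by simp
          thus False using nu by simp
        qed
        moreover have "x \<notin> homothet l1 a1 C"
        proof
          assume "x \<in> homothet l1 a1 C"
          hence "x \<in> P \<inter> homothet l1 a1 C" using xP by blast
          hence "x \<in> {u,v}" using H1(5) by simp
          thus False using nu by auto
        qed
        moreover have "y \<notin> homothet l1 a1 C"
        proof
          assume "y \<in> homothet l1 a1 C"
          hence "y \<in> P \<inter> homothet l1 a1 C" using yP by blast
          hence "y \<in> {u,v}" using H1(5) by simp
          thus False using nu by auto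
        qed
        ultimately have False by blast
        thus ?thesis ..
      next
        case True
        obtain k where fk: "f = k *\<^sub>R e" using par2[OF True e0] by blast
        have k0: "k \<noteq> 0" using xy fk unfolding f_def by auto
        define a where "a = t * k"
        define b where "b = (t - 1) * k"
        have xa: "x = z + a *\<^sub>R e" unfolding xf fk a_def by simp
        have yb: "y = z + b *\<^sub>R e" unfolding yf fk b_def by simp
        have sgn: "(a < 0 \<and> 0 < b) \<or> (b < 0 \<and> 0 < a)"
        proof (cases "k > 0")
          case True thus ?thesis using t by (simp add: a_def b_def mult_pos_pos mult_neg_pos)
        next
          case False hence "k < 0" using k0 by simp
          thus ?thesis using t by (simp add: a_def b_def mult_pos_neg mult_neg_neg)
        qed
        have inj: "\<And>r r'. z + r *\<^sub>R e = z + r' *\<^sub>R e \<Longrightarrow> r = r'" using e0 by simp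
        have seg1: "z + r *\<^sub>R e \<in> homothet l1 a1 C" if "s-1 \<le> r" "r \<le> s" for r
        proof -
          have "z + r *\<^sub>R e \<in> closed_segment v u"
            unfolding ue ve by (rule seg_param) (use that in auto)
          thus ?thesis using H1(4) by (auto simp: closed_segment_commute)
        qed
        have seg2: "z + r *\<^sub>R e \<in> homothet l2 a2 C" if "min a b \<le> r" "r \<le> max a b" for r
        proof -
          have "z + r *\<^sub>R e \<in> closed_segment x y"
            unfolding xa yb by (rule seg_param) (use that in auto)
          thus ?thesis using H2(4) by auto
        qed
        have F1: "a = s \<or> a = s-1" if "s-1 \<le> a" "a \<le> s"
        proof -
          have "x \<in> {u,v}" using seg1[OF that] xa xP H1(5) by blast
          thus ?thesis unfolding xa ue ve using e0 by simp
        qed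
        have F2: "b = s \<or> b = s-1" if "s-1 \<le> b" "b \<le> s"
        proof -
          have "y \<in> {u,v}" using seg1[OF that] yb yP H1(5) by blast
          thus ?thesis unfolding yb ue ve using e0 by simp
        qed
        have F3: "s = a \<or> s = b" if "min a b \<le> s" "s \<le> max a b"
        proof -
          have "u \<in> {x,y}" using seg2[OF that] ue uP H2(5) by blast
          thus ?thesis unfolding xa yb ue using e0 by simp
        qed
        have F4: "s-1 = a \<or> s-1 = b" if "min a b \<le> s-1" "s-1 \<le> max a b"
        proof -
          have "v \<in> {x,y}" using seg2[OF that] ve vP H2(5) by blast
          thus ?thesis unfolding xa yb ve using e0 by simp
        qed
        from real1d[OF s sgn F1 F2 F3 F4]
        have "{u,v} = {x,y}" unfolding ue ve xa yb by auto
        with ne show ?thesis by blast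
      qed
    qed
  qed
  have part1: "w \<notin> closed_segment u v"
    if "st_adj P C u v" "w \<in> P" "w \<noteq> u" "w \<noteq> v" for u v w
    using segP[OF that(1,2)] that(3,4) by blast
  show ?thesis unfolding plane_drawing_def using part1 part2 by blast
qed

end
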